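(* Consider the discrete first-price auction in the model without ties, with values drawn i.i.d. from a distribution with full support on $X$. Let $\beta$ be a symmetric equilibrium (SE) bidding function, let $v\in X$ with $v+1\in X$, and let $b=\beta(v)$. Then $\beta(v+1)\le b+1$.
   Context: Model. There are $n\ge 2$ risk-neutral bidders competing for one indivisible object. Normalise the grid so that values and bids lie in $X=\{0,1,2,\dots,x\}$ for some $x\in\mathbb N$. Each bidder $i$ privately learns a value $v_i\in X$; values are drawn independently from a common distribution in which every element of $X$ has strictly positive probability. Each bidder submits a bid $b_i\in X$. A (pure) strategy is a bidding function $\beta:X\to X$. In the model without ties, bidder $i$ wins iff $b_i>b_j$ for all $j\neq i$ (if the highest bid is tied, nobody wins). In the first-price auction, a bidder with value $v_i$ bidding $b_i$ gets expected payoff $(v_i-b_i)\Pr(i\text{ wins})$. An equilibrium is a profile of bidding functions such that each bidder's bidding function maximises their expected payoff given the others' bidding functions (a pure-strategy Bayes–Nash equilibrium) and such that no bidder uses a weakly dominated bidding function (a bidding function is weakly dominated if some other bidding function yields at least as high expected payoff against every profile of opponents' bidding functions, and strictly higher against some). A symmetric equilibrium (SE) is an equilibrium in which all bidders use the same bidding function $\beta$. *)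

theory Defs
  imports Complex_Main
begin

text \<open>Grid X = {0..x}. A bidding function is a map nat => nat sending X into X
  (values outside X are irrelevant).
  An opponent profile with m opponents is bs :: nat => (nat => nat), bs j for j < m.\<close>

definition valid_bf :: "nat \<Rightarrow> (nat \<Rightarrow> nat) \<Rightarrow> bool" where
  "valid_bf x \<beta> \<longleftrightarrow> (\<forall>v\<le>x. \<beta> v \<le> x)"

definition full_support_dist :: "nat \<Rightarrow> (nat \<Rightarrow> real) \<Rightarrow> bool" where
  "full_support_dist x p \<longleftrightarrow> (\<forall>v\<le>x. p v > 0) \<and> (\<Sum>v\<le>x. p v) = 1"

text \<open>Probability (no ties model) that bid b strictly beats all m opponents,
  opponent j using bidding function bs j, values i.i.d. with law p.\<close>
definition win_prob :: "nat \<Rightarrow> (nat \<Rightarrow> real) \<Rightarrow> nat \<Rightarrow> (nat \<Rightarrow> nat \<Rightarrow> nat) \<Rightarrow> nat \<Rightarrow> real" where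
  "win_prob x p m bs b = (\<Prod>j<m. (\<Sum>w\<in>{w. w \<le> x \<and> bs j w < b}. p w))"

definition fp_payoff :: "nat \<Rightarrow> (nat \<Rightarrow> real) \<Rightarrow> nat \<Rightarrow> (nat \<Rightarrow> nat \<Rightarrow> nat) \<Rightarrow> (nat \<Rightarrow> nat) \<Rightarrow> real" where
  "fp_payoff x p m bs \<gamma> = (\<Sum>v\<le>x. p v * ((real v - real (\<gamma> v)) * win_prob x p m bs (\<gamma> v)))"

definition valid_profile :: "nat \<Rightarrow> nat \<Rightarrow> (nat \<Rightarrow> nat \<Rightarrow> nat) \<Rightarrow> bool" where
  "valid_profile x m bs \<longleftrightarrow> (\<forall>j<m. valid_bf x (bs j))"

definition weakly_dominated :: "nat \<Rightarrow> (nat \<Rightarrow> real) \<Rightarrow> nat \<Rightarrow> (nat \<Rightarrow> nat) \<Rightarrow> bool" where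
  "weakly_dominated x p m \<beta> \<longleftrightarrow>
     (\<exists>\<gamma>. valid_bf x \<gamma> \<and>
        (\<forall>bs. valid_profile x m bs \<longrightarrow> fp_payoff x p m bs \<gamma> \<ge> fp_payoff x p m bs \<beta>) \<and>
        (\<exists>bs. valid_profile x m bs \<and> fp_payoff x p m bs \<gamma> > fp_payoff x p m bs \<beta>))"

definition symmetric_eq :: "nat \<Rightarrow> nat \<Rightarrow> (nat \<Rightarrow> real) \<Rightarrow> (nat \<Rightarrow> nat) \<Rightarrow> bool" where
  "symmetric_eq n x p \<beta> \<longleftrightarrow>
     valid_bf x \<beta> \<and>
     (\<forall>\<gamma>. valid_bf x \<gamma> \<longrightarrow>
        fp_payoff x p (n - 1) (\<lambda>_. \<beta>) \<gamma> \<le> fp_payoff x p (n - 1) (\<lambda>_. \<beta>) \<beta>) \<and>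
     \<not> weakly_dominated x p (n - 1) \<beta>"

end

theory Submission
  imports Defs
begin

lemma fp_upd:
  assumes "w \<le> x"
  shows "fp_payoff x p m bs (\<beta>(w:=a)) = fp_payoff x p m bs \<beta>
     + p w * ((real w - real a) * win_prob x p m bs a)
     - p w * ((real w - real (\<beta> w)) * win_prob x p m bs (\<beta> w))"
proof -
  let ?f = "\<lambda>\<gamma> v. p v * ((real v - real (\<gamma> v)) * win_prob x p m bs (\<gamma> v))"
  have w: "w \<in> {..x}" using assms by simp
  have r: "sum (?f (\<beta>(w:=a))) ({..x} - {w}) = sum (?f \<beta>) ({..x} - {w})"
    by (rule sum.cong) auto
  have "fp_payoff x p m bs (\<beta>(w:=a)) = ?f (\<beta>(w:=a)) w + sum (?f (\<beta>(w:=a))) ({..x} - {w})"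
    unfolding fp_payoff_def using sum.remove[OF _ w, of "?f (\<beta>(w:=a))"] by simp
  moreover have "fp_payoff x p m bs \<beta> = ?f \<beta> w + sum (?f \<beta>) ({..x} - {w})"
    unfolding fp_payoff_def using sum.remove[OF _ w, of "?f \<beta>"] by simp
  ultimately show ?thesis using r by simp
qed

lemma wp_nonneg:
  assumes "full_support_dist x p"
  shows "win_prob x p m bs b \<ge> 0"
  unfolding win_prob_def
  by (rule prod_nonneg, rule sum_nonneg) (use assms in \<open>auto simp: full_support_dist_def less_imp_le\<close>)

lemma wp_const: "win_prob x p m (\<lambda>_. \<beta>) b = (\<Sum>w\<in>{w. w \<le> x \<and> \<beta> w < b}. p w) ^ m"
  unfolding win_prob_def by simp

theorem lemma4:
  fixes n x :: nat and p :: "nat \<Rightarrow> real" and \<beta> :: "nat \<Rightarrow> nat" and v :: nat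
  assumes "n \<ge> 2"
    and "full_support_dist x p"
    and "symmetric_eq n x p \<beta>"
    and "v + 1 \<le> x"
  shows "\<beta> (v + 1) \<le> \<beta> v + 1"
proof -
  define m where "m = n - 1"
  define W where "W b = win_prob x p m (\<lambda>_. \<beta>) b" for b
  have pos: "\<And>w. w \<le> x \<Longrightarrow> p w > 0" using assms(2) by (auto simp: full_support_dist_def)
  have vb: "valid_bf x \<beta>" using assms(3) by (simp add: symmetric_eq_def)
  have opt0: "\<And>\<gamma>. valid_bf x \<gamma> \<Longrightarrow> fp_payoff x p m (\<lambda>_. \<beta>) \<gamma> \<le> fp_payoff x p m (\<lambda>_. \<beta>) \<beta>"
    using assms(3) by (simp add: symmetric_eq_def m_def)
  have nd: "\<not> weakly_dominated x p m \<beta>" using assms(3) by (simp add: symmetric_eq_def m_def)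
  have Wnn: "\<And>b. W b \<ge> 0" unfolding W_def using wp_nonneg[OF assms(2)] .
  have opt: "(real w - real a) * W a \<le> (real w - real (\<beta> w)) * W (\<beta> w)"
    if "w \<le> x" "a \<le> x" for w a
  proof -
    have "valid_bf x (\<beta>(w:=a))" using vb that by (auto simp: valid_bf_def)
    from opt0[OF this] have "p w * ((real w - real a) * W a) \<le> p w * ((real w - real (\<beta> w)) * W (\<beta> w))"
      unfolding fp_upd[OF that(1)] W_def by simp
    then show ?thesis using pos[OF that(1)] by simp
  qed
  have below: "\<beta> w \<le> w" if "w \<le> x" for w
  proof (rule ccontr)
    assume h: "\<not> \<beta> w \<le> w"
    have "weakly_dominated x p m \<beta>"
      unfolding weakly_dominated_def
    proof (intro exI conjI allI impI)
      show "valid_bf x (\<beta>(w:=w))" using vb that by (auto simp: valid_bf_def)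
      fix bs assume "valid_profile x m bs"
      have "0 \<le> p w * ((real (\<beta> w) - real w) * win_prob x p m bs (\<beta> w))"
        using h pos[OF that] wp_nonneg[OF assms(2)] by simp
      then show "fp_payoff x p m bs \<beta> \<le> fp_payoff x p m bs (\<beta>(w:=w))"
        unfolding fp_upd[OF that] by (simp add: algebra_simps)
    next
      let ?bs = "\<lambda>_ _. 0::nat"
      show "valid_profile x m ?bs" by (simp add: valid_profile_def valid_bf_def)
      have "win_prob x p m ?bs (\<beta> w) = 1"
        using h assms(2) by (simp add: win_prob_def full_support_dist_def atMost_def)
      then have "0 < p w * ((real (\<beta> w) - real w) * win_prob x p m ?bs (\<beta> w))"
        using h pos[OF that] by simp
      then show "fp_payoff x p m ?bs \<beta> < fp_payoff x p m ?bs (\<beta>(w:=w))"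
        unfolding fp_upd[OF that] by (simp add: algebra_simps)
    qed
    with nd show False by simp
  qed
  have Wpos: "W a > 0" if "a \<ge> 1" for a
  proof -
    have z: "0 \<in> {w. w \<le> x \<and> \<beta> w < a}" using below[of 0] that by simp
    have "p 0 \<le> (\<Sum>w\<in>{w. w \<le> x \<and> \<beta> w < a}. p w)"
      by (rule member_le_sum[OF z]) (auto simp: pos less_imp_le)
    moreover have "p 0 > 0" using pos by simp
    ultimately show ?thesis unfolding W_def wp_const by simp
  qed
  have Wmono: "W a \<le> W a'" if "a \<le> a'" for a a'
  proof -
    have "(\<Sum>w\<in>{w. w \<le> x \<and> \<beta> w < a}. p w) \<le> (\<Sum>w\<in>{w. w \<le> x \<and> \<beta> w < a'}. p w)"
      by (rule sum_mono2) (use that in \<open>auto simp: pos less_imp_le\<close>)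
    moreover have "0 \<le> (\<Sum>w\<in>{w. w \<le> x \<and> \<beta> w < a}. p w)"
      by (rule sum_nonneg) (auto simp: pos less_imp_le)
    ultimately show ?thesis unfolding W_def wp_const by (simp add: power_mono)
  qed
  have mono: "\<beta> w \<le> \<beta> w'" if "w < w'" "w' \<le> x" for w w'
  proof (rule ccontr)
    assume h: "\<not> \<beta> w \<le> \<beta> w'"
    have wx: "w \<le> x" using that by simp
    have a: "\<beta> w \<le> x" "\<beta> w' \<le> x" using vb that by (auto simp: valid_bf_def)
    have i1: "(real w - real (\<beta> w')) * W (\<beta> w') \<le> (real w - real (\<beta> w)) * W (\<beta> w)"
      using opt[OF wx a(2)] .
    have i2: "(real w' - real (\<beta> w)) * W (\<beta> w) \<le> (real w' - real (\<beta> w')) * W (\<beta> w')"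
      using opt[OF that(2) a(1)] .
    have "(real w' - real w) * (W (\<beta> w') - W (\<beta> w)) \<ge> 0"
      using i1 i2 by (simp add: algebra_simps)
    moreover have "real w' - real w > 0" using that by simp
    ultimately have "W (\<beta> w') \<ge> W (\<beta> w)"
      by (simp add: zero_le_mult_iff)
    moreover have "W (\<beta> w') \<le> W (\<beta> w)" using Wmono h by simp
    ultimately have eq: "W (\<beta> w') = W (\<beta> w)" by simp
    have "W (\<beta> w) > 0" using Wpos h by simp
    with i1 eq have "real w - real (\<beta> w') \<le> real w - real (\<beta> w)" by simp
    with h show False by simp
  qed
  show ?thesis
  proof (rule ccontr)
    assume h: "\<not> \<beta> (v + 1) \<le> \<beta> v + 1"
    let ?b = "\<beta> v" and ?c = "\<beta> (v+1)"
    have cx: "?c \<le> x" using vb assms(4) by (auto simp: valid_bf_def)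
    have seteq: "{w. w \<le> x \<and> \<beta> w < ?b + 1} = {w. w \<le> x \<and> \<beta> w < ?c}"
    proof (intro set_eqI iffI)
      fix w assume "w \<in> {w. w \<le> x \<and> \<beta> w < ?b + 1}" then show "w \<in> {w. w \<le> x \<and> \<beta> w < ?c}"
        using h by auto
    next
      fix w assume w: "w \<in> {w. w \<le> x \<and> \<beta> w < ?c}"
      show "w \<in> {w. w \<le> x \<and> \<beta> w < ?b + 1}"
      proof (cases "w \<le> v")
        case True
        then have "\<beta> w \<le> ?b" using mono[of w v] assms(4) by (cases "w = v") auto
        then show ?thesis using w by auto
      next
        case False
        then have "?c \<le> \<beta> w" using mono[of "v+1" w] w by (cases "w = v+1") auto
        then show ?thesis using w by auto
      qed
    qed
    have Weq: "W (?b + 1) = W ?c" unfolding W_def wp_const seteq ..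
    have "W ?c > 0" using Wpos h by simp
    moreover have "(real (v+1) - real (?b+1)) * W (?b+1) \<le> (real (v+1) - real ?c) * W ?c"
      using opt[OF assms(4), of "?b+1"] h cx by simp
    ultimately have "real (v+1) - real (?b+1) \<le> real (v+1) - real ?c" using Weq by simp
    with h show False by simp
  qed
qed

end
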